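(* Let $\alpha,\beta,p\in\mathbb{C}$ be constants and let $h,g:\mathbb{Z}^2\to\mathbb{C}$ satisfy $\widehat{h}-\widetilde{h}=\widetilde{\widetilde{g}}-g$ and $(h+\widetilde g)g=\beta^2-\alpha^2$. Let $\varphi$ solve the Lax pair $$\widetilde{\widetilde{\varphi}}+h\,\widetilde{\varphi}+\alpha^2\varphi=p^2\varphi,\qquad \widehat{\varphi}=\widetilde{\varphi}-g\,\varphi,$$ and let $\varphi^*$ solve the adjoint Lax pair $$\widetilde{\widetilde{\varphi^*}}-h\,\widetilde{\varphi^*}+\alpha^2\varphi^*=p^2\varphi^*,\qquad \widehat{\varphi^*}=\widetilde{\varphi^*}+g\,\varphi^* .$$ Then there is a constant $\rho$ such that for all $n,m\in\mathbb{Z}$ $$\varphi\,\widetilde{\varphi^*}+\varphi^*\widetilde{\varphi}=\varphi\,\widehat{\varphi^*}+\varphi^*\widehat{\varphi}=(-1)^{n+m}\rho\,s^{2n}t^{2m},$$ where $s^2=\alpha^2-p^2$, $t^2=\beta^2-p^2$. If $\varphi^*$ is proportional to $(-1)^{n+m}\varphi$, then $\rho=0$.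
   Context: Shift notation: for a function $f$ on $\mathbb{Z}^2$ (variables $n,m$), $\widetilde f(n,m)=f(n+1,m)$, $\widehat f(n,m)=f(n,m+1)$, and combined accents denote composed shifts. *)

theory Defs
  imports Complex_Main
begin

end

theory Submission
  imports Defs
begin

lemma geom_int:
  fixes x :: "int \<Rightarrow> complex"
  assumes st: "\<And>n. x (n+1) = c * x n" and c: "c \<noteq> 0"
  shows "x n = c powi n * x 0"
proof (induct n rule: int_induct[where k=0])
  case base then show ?case by simp
next
  case (step1 i)
  then show ?case using st[of i] c by (simp add: power_int_add)
next
  case (step2 i)
  have "x i = c * x (i - 1)" using st[of "i-1"] by simp
  then have "x (i - 1) = x i / c" using c by (simp add: field_simps)
  then show ?case using step2 c by (simp add: power_int_diff)
qed

lemma aux_ring: "- (a::complex) * x - (b - a) * x = - b * x"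
  by (simp add: algebra_simps)

lemma zero_case:
  fixes x :: "int \<Rightarrow> complex"
  assumes st: "\<And>n. x (n+1) = 0 * x n"
  shows "x n = 0"
  using st[of "n-1"] by simp

theorem lemma3p1:
  fixes \<alpha> \<beta> p :: complex
    and h g \<phi> \<phi>s :: "int \<Rightarrow> int \<Rightarrow> complex"
  assumes compat1: "\<And>n m. h n (m + 1) - h (n + 1) m = g (n + 2) m - g n m"
    and compat2: "\<And>n m. (h n m + g (n + 1) m) * g n m = \<beta>\<^sup>2 - \<alpha>\<^sup>2"
    and lax1: "\<And>n m. \<phi> (n + 2) m + h n m * \<phi> (n + 1) m + \<alpha>\<^sup>2 * \<phi> n m = p\<^sup>2 * \<phi> n m"
    and lax2: "\<And>n m. \<phi> n (m + 1) = \<phi> (n + 1) m - g n m * \<phi> n m"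
    and adj1: "\<And>n m. \<phi>s (n + 2) m - h n m * \<phi>s (n + 1) m + \<alpha>\<^sup>2 * \<phi>s n m = p\<^sup>2 * \<phi>s n m"
    and adj2: "\<And>n m. \<phi>s n (m + 1) = \<phi>s (n + 1) m + g n m * \<phi>s n m"
  shows "\<exists>\<rho>::complex.
     (\<forall>n m. \<phi> n m * \<phi>s (n + 1) m + \<phi>s n m * \<phi> (n + 1) m
              = (-1) powi (n + m) * \<rho> * (\<alpha>\<^sup>2 - p\<^sup>2) powi n * (\<beta>\<^sup>2 - p\<^sup>2) powi m
          \<and> \<phi> n m * \<phi>s n (m + 1) + \<phi>s n m * \<phi> n (m + 1)
              = (-1) powi (n + m) * \<rho> * (\<alpha>\<^sup>2 - p\<^sup>2) powi n * (\<beta>\<^sup>2 - p\<^sup>2) powi m)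
   \<and> ((\<exists>c::complex. \<forall>n m. \<phi>s n m = c * (-1) powi (n + m) * \<phi> n m) \<longrightarrow> \<rho> = 0)"
proof -
  define a where "a = \<alpha>\<^sup>2 - p\<^sup>2"
  define b where "b = \<beta>\<^sup>2 - p\<^sup>2"
  define F where "F n m = \<phi> n m * \<phi>s (n + 1) m + \<phi>s n m * \<phi> (n + 1) m" for n m
  have F2: "\<phi> n m * \<phi>s n (m + 1) + \<phi>s n m * \<phi> n (m + 1) = F n m" for n m
    unfolding F_def adj2 lax2 by (simp add: algebra_simps)
  have pp: "\<phi> (n+2) m = - h n m * \<phi> (n+1) m - a * \<phi> n m" for n m
    using lax1[of n m] unfolding a_def by (simp add: algebra_simps)
  have ps: "\<phi>s (n+2) m = h n m * \<phi>s (n+1) m - a * \<phi>s n m" for n m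
    using adj1[of n m] unfolding a_def by (simp add: algebra_simps)
  have stn: "F (n+1) m = - a * F n m" for n m
  proof -
    have e: "n + 1 + 1 = n + 2" by simp
    show ?thesis unfolding F_def e pp ps by (simp add: algebra_simps)
  qed
  have stm: "F n (m+1) = - b * F n m" for n m
  proof -
    have e: "n + 1 + 1 = n + 2" by simp
    have K: "(h n m + g (n + 1) m) * g n m = b - a" using compat2[of n m] unfolding a_def b_def by simp
    have "F n (m+1) = (\<phi> (n + 1) m - g n m * \<phi> n m) * (\<phi>s (n + 2) m + g (n+1) m * \<phi>s (n+1) m)
       + (\<phi>s (n + 1) m + g n m * \<phi>s n m) * (\<phi> (n + 2) m - g (n+1) m * \<phi> (n+1) m)"
      unfolding F_def lax2 adj2 e by simp
    also have "\<dots> = - a * F n m - ((h n m + g (n + 1) m) * g n m) * F n m"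
      unfolding pp ps F_def by (simp add: algebra_simps)
    also have "\<dots> = - a * F n m - (b - a) * F n m" by (simp only: K)
    also have "\<dots> = - b * F n m" by (rule aux_ring)
    finally show ?thesis .
  qed
  have main: "F n m = (-1) powi (n + m) * F 0 0 * a powi n * b powi m" for n m
  proof (cases "a = 0 \<or> b = 0")
    case True
    then show ?thesis
    proof
      assume a0: "a = 0"
      have "F n m = 0" using zero_case[of "\<lambda>k. F k m"] stn a0 by simp
      moreover have "F 0 0 = 0" using zero_case[of "\<lambda>k. F k 0"] stn a0 by simp
      ultimately show ?thesis by simp
    next
      assume b0: "b = 0"
      have "F n m = 0" using zero_case[of "\<lambda>k. F n k"] stm b0 by simp
      moreover have "F 0 0 = 0" using zero_case[of "\<lambda>k. F 0 k"] stm b0 by simp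
      ultimately show ?thesis by simp
    qed
  next
    case False
    have 1: "F n m = (-a) powi n * F 0 m" using geom_int[of "\<lambda>k. F k m" "-a" n, OF stn] False by simp
    have 2: "F 0 m = (-b) powi m * F 0 0" using geom_int[of "\<lambda>k. F 0 k" "-b" m, OF stm] False by simp
    have 3: "(-1::complex) powi (n + m) = (-1) powi n * (-1) powi m" by (simp add: power_int_add)
    have 4: "(-a) powi n = (-1) powi n * a powi n" "(-b) powi m = (-1) powi m * b powi m"
      using power_int_mult_distrib[of "-1" a n] power_int_mult_distrib[of "-1" b m] by simp_all
    show ?thesis unfolding 1 2 3 4 by (simp add: algebra_simps)
  qed
  show ?thesis
  proof (intro exI[of _ "F 0 0"] conjI allI impI)
    fix n m
    show "\<phi> n m * \<phi>s (n + 1) m + \<phi>s n m * \<phi> (n + 1) m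
              = (-1) powi (n + m) * F 0 0 * (\<alpha>\<^sup>2 - p\<^sup>2) powi n * (\<beta>\<^sup>2 - p\<^sup>2) powi m"
      using main[of n m] unfolding F_def a_def b_def .
    show "\<phi> n m * \<phi>s n (m + 1) + \<phi>s n m * \<phi> n (m + 1)
              = (-1) powi (n + m) * F 0 0 * (\<alpha>\<^sup>2 - p\<^sup>2) powi n * (\<beta>\<^sup>2 - p\<^sup>2) powi m"
      using main[of n m] unfolding F2 a_def b_def .
  next
    assume "\<exists>c::complex. \<forall>n m. \<phi>s n m = c * (-1) powi (n + m) * \<phi> n m"
    then obtain c where c: "\<And>n m. \<phi>s n m = c * (-1) powi (n + m) * \<phi> n m" by blast
    have "(-1::complex) powi (0 + 1 + 0) = -1" by simp
    then show "F 0 0 = 0" unfolding F_def c by (simp add: algebra_simps)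
  qed
qed

end
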